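(* Let $f_j(\Delta_{n,k})$ denote the number of $j$-dimensional faces of the polytope $\Delta_{n,k}$. Then, as formal power series, $$ \sum_{n\ge1}\sum_{k=1}^n\sum_{j=1}^n f_j(\Delta_{n,k})\,x^k y^{n-k}t^j=\frac{xt}{(1-x-y)(1-x-y-xt)(1-x-y-yt)}. $$
   Context: For integers $0<k\le n$, $\Delta_{n,k}=\{(x_1,\ldots,x_n)\in[0,1]^n : k-1\le x_1+\cdots+x_n\le k\}$, a convex polytope in $\mathbb{R}^n$. *)

theory Defs
  imports "HOL-Analysis.Analysis" "HOL-Computational_Algebra.Formal_Power_Series"
begin

text \<open>The hypersimplex-type polytope Delta(n,k) in R^n, with R^n rendered as real^'n, n = CARD('n).\<close>
definition Delta :: "nat \<Rightarrow> (real ^ 'n::finite) set" where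
  "Delta k = {x. (\<forall>i. 0 \<le> x $ i \<and> x $ i \<le> 1) \<and>
                 real k - 1 \<le> (\<Sum>i\<in>UNIV. x $ i) \<and> (\<Sum>i\<in>UNIV. x $ i) \<le> real k}"

definition num_faces :: "nat \<Rightarrow> ('a::euclidean_space) set \<Rightarrow> nat" where
  "num_faces j P = card {F. F face_of P \<and> aff_dim F = int j}"

text \<open>Trivariate formal power series as nested fps: outer variable t, middle x, inner y.\<close>
type_synonym fps3 = "real fps fps fps"

definition varX :: fps3 where "varX = fps_const fps_X"
definition varY :: fps3 where "varY = fps_const (fps_const fps_X)"
definition varT :: fps3 where "varT = fps_X"

definition coeff3 :: "fps3 \<Rightarrow> nat \<Rightarrow> nat \<Rightarrow> nat \<Rightarrow> real" where
  "coeff3 G a b j = fps_nth (fps_nth (fps_nth G j) a) b"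

end

theory Submission
  imports Defs
begin

definition mk :: "(int \<Rightarrow> int \<Rightarrow> int \<Rightarrow> real) \<Rightarrow> fps3" where
  "mk g = Abs_fps (\<lambda>j. Abs_fps (\<lambda>a. Abs_fps (\<lambda>b. g (int a) (int b) (int j))))"

definition nz :: "(int \<Rightarrow> int \<Rightarrow> int \<Rightarrow> real) \<Rightarrow> bool" where
  "nz g \<longleftrightarrow> (\<forall>a b j. a < 0 \<or> b < 0 \<or> j < 0 \<longrightarrow> g a b j = 0)"

lemma coeff3_mk [simp]: "coeff3 (mk g) a b j = g a b j"
  by (simp add: coeff3_def mk_def)

lemma fps3_eqI: "(\<And>a b j. coeff3 F a b j = coeff3 H a b j) \<Longrightarrow> F = H"
  unfolding coeff3_def by (intro fps_ext) metis

lemma coeff3_diff [simp]: "coeff3 (F - H) a b j = coeff3 F a b j - coeff3 H a b j"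
  by (simp add: coeff3_def)

lemma coeff3_one: "coeff3 (F * 1) a b j = coeff3 F a b j" by simp

lemma coeff3_X: "coeff3 (F * varX) a b j = (if a = 0 then 0 else coeff3 F (a-1) b j)"
  by (simp add: coeff3_def varX_def)

lemma coeff3_Y: "coeff3 (F * varY) a b j = (if b = 0 then 0 else coeff3 F a (b-1) j)"
  by (simp add: coeff3_def varY_def)

lemma coeff3_T: "coeff3 (F * varT) a b j = (if j = 0 then 0 else coeff3 F a b (j-1))"
  by (simp add: coeff3_def varT_def)

lemma coeff3_XT: "coeff3 (varX * varT) a b j = (if a = 1 \<and> b = 0 \<and> j = 1 then 1 else 0)"
proof -
  have "varX * varT = 1 * varX * varT" by simp
  then show ?thesis
    by (simp only: coeff3_T coeff3_X) (auto simp: coeff3_def)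
qed

lemma mkX: "nz g \<Longrightarrow> coeff3 (mk g * varX) a b j = g (int a - 1) (int b) (int j)"
  by (simp add: coeff3_X nz_def of_nat_diff)

lemma mkY: "nz g \<Longrightarrow> coeff3 (mk g * varY) a b j = g (int a) (int b - 1) (int j)"
  by (simp add: coeff3_Y nz_def of_nat_diff)

lemma mkXT: "nz g \<Longrightarrow> coeff3 (mk g * (varX * varT)) a b j = g (int a - 1) (int b) (int j - 1)"
  unfolding mult.assoc[symmetric]
  by (auto simp add: coeff3_X coeff3_T nz_def of_nat_diff)

lemma mkYT: "nz g \<Longrightarrow> coeff3 (mk g * (varY * varT)) a b j = g (int a) (int b - 1) (int j - 1)"
  unfolding mult.assoc[symmetric]
  by (auto simp add: coeff3_Y coeff3_T nz_def of_nat_diff)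

lemma mk_step1: "nz g \<Longrightarrow> coeff3 (mk g * (1 - varX - varY)) a b j
   = g a b j - g (int a - 1) b j - g a (int b - 1) j"
  by (simp add: right_diff_distrib mkX mkY)

lemma mk_step2: "nz g \<Longrightarrow> coeff3 (mk g * (1 - varX - varY - varX * varT)) a b j
   = g a b j - g (int a - 1) b j - g a (int b - 1) j - g (int a - 1) b (int j - 1)"
  by (simp add: right_diff_distrib mkX mkY mkXT)

lemma mk_step3: "nz g \<Longrightarrow> coeff3 (mk g * (1 - varX - varY - varY * varT)) a b j
   = g a b j - g (int a - 1) b j - g a (int b - 1) j - g a (int b - 1) (int j - 1)"
  by (simp add: right_diff_distrib mkX mkY mkYT)


definition M :: "nat \<Rightarrow> nat \<Rightarrow> nat \<Rightarrow> real" where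
  "M p q r = fact (p+q+r) / (fact p * fact q * fact r)"

definition tri :: "int \<Rightarrow> int \<Rightarrow> int \<Rightarrow> real" where
  "tri p j z = (if p < 0 \<or> j < 0 \<or> z < 0 then 0 else M (nat p) (nat j) (nat z))"

lemma M_pred: "0 < p + q + r \<Longrightarrow>
   M p q r = (if p = 0 then 0 else M (p-1) q r) + (if q = 0 then 0 else M p (q-1) r)
            + (if r = 0 then 0 else M p q (r-1))"
proof -
  assume h: "0 < p + q + r"
  define N where "N = p + q + r"
  have fN: "fact N = real N * fact (N - 1)" using h N_def by (simp add: fact_reduce)
  have key: "\<And>u v w. u > 0 \<Longrightarrow> u + v + w = N \<Longrightarrow> M (u-1) v w = real u * fact (N-1) / (fact u * fact v * fact w)"
  proof -
    fix u v w :: nat assume u: "u > 0" and s: "u + v + w = N"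
    then obtain u' where u': "u = Suc u'" by (cases u) auto
    have "N - 1 = u' + v + w" using s u' by simp
    then show "M (u-1) v w = real u * fact (N-1) / (fact u * fact v * fact w)"
      using u' by (simp add: M_def fact_Suc del: of_nat_Suc)
  qed
  have A: "(if p = 0 then 0 else M (p-1) q r) = real p * fact (N-1) / (fact p * fact q * fact r)"
    using key[of p q r] N_def by auto
  have B: "(if q = 0 then 0 else M p (q-1) r) = real q * fact (N-1) / (fact p * fact q * fact r)"
    using key[of q p r] N_def by (auto simp: M_def ac_simps)
  have C: "(if r = 0 then 0 else M p q (r-1)) = real r * fact (N-1) / (fact p * fact q * fact r)"
    using key[of r p q] N_def by (auto simp: M_def ac_simps)
  have S: "real p * fact (N-1) + real q * fact (N-1) + real r * fact (N-1) = fact N"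
    using fN N_def by (simp add: algebra_simps)
  have "M p q r = (real p * fact (N-1) + real q * fact (N-1) + real r * fact (N-1)) / (fact p * fact q * fact r)"
    unfolding S by (simp add: M_def N_def)
  then show ?thesis unfolding A B C by (simp add: add_divide_distrib)
qed

lemma tri_pascal: "\<not> (p = 0 \<and> j = 0 \<and> z = 0) \<Longrightarrow>
   tri p j z = tri (p-1) j z + tri p (j-1) z + tri p j (z-1)"
proof (cases "p < 0 \<or> j < 0 \<or> z < 0")
  case True then show ?thesis by (auto simp: tri_def)
next
  case False
  assume nz: "\<not> (p = 0 \<and> j = 0 \<and> z = 0)"
  have h: "0 < nat p + nat j + nat z" using False nz by auto
  have e1: "tri (p-1) j z = (if nat p = 0 then 0 else M (nat p - 1) (nat j) (nat z))"
    using False by (auto simp: tri_def nat_diff_distrib)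
  have e2: "tri p (j-1) z = (if nat j = 0 then 0 else M (nat p) (nat j - 1) (nat z))"
    using False by (auto simp: tri_def nat_diff_distrib)
  have e3: "tri p j (z-1) = (if nat z = 0 then 0 else M (nat p) (nat j) (nat z - 1))"
    using False by (auto simp: tri_def nat_diff_distrib)
  show ?thesis unfolding e1 e2 e3 using M_pred[OF h] False by (simp add: tri_def)
qed

lemma tri_pascal': "\<not> (p = 0 \<and> j = 0 \<and> z = 0) \<Longrightarrow>
   tri p j z - tri (p-1) j z - tri p j (z-1) = tri p (j-1) z"
  using tri_pascal by simp

lemma tri_neg: "p < 0 \<or> j < 0 \<or> z < 0 \<Longrightarrow> tri p j z = 0"
  by (simp add: tri_def)

definition ffree :: "int \<Rightarrow> int \<Rightarrow> int \<Rightarrow> real" where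
  "ffree a b j = (\<Sum>r\<in>{1..j}. tri (a-r) j (b-j+r))"
definition ftop :: "int \<Rightarrow> int \<Rightarrow> int \<Rightarrow> real" where
  "ftop a b j = (\<Sum>r\<in>{1..j}. tri (a-r) (j+1) (b-j-1+r))"
definition fbot :: "int \<Rightarrow> int \<Rightarrow> int \<Rightarrow> real" where
  "fbot a b j = (\<Sum>r\<in>{1..j}. tri (a-1-r) (j+1) (b-j+r))"
definition gall :: "int \<Rightarrow> int \<Rightarrow> int \<Rightarrow> real" where
  "gall a b j = ffree a b j + ftop a b j + fbot a b j"
definition g2 :: "int \<Rightarrow> int \<Rightarrow> int \<Rightarrow> real" where
  "g2 a b j = tri (a-j) (j-1) b"

lemma nz_ffree: "nz ffree"
  unfolding nz_def ffree_def by (auto intro!: sum.neutral tri_neg)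
lemma nz_ftop: "nz ftop"
  unfolding nz_def ftop_def by (auto intro!: sum.neutral tri_neg)
lemma nz_fbot: "nz fbot"
  unfolding nz_def fbot_def by (auto intro!: sum.neutral tri_neg)
lemma nz_gall: "nz gall"
  using nz_ffree nz_ftop nz_fbot unfolding nz_def gall_def by simp
lemma nz_g2: "nz g2"
  unfolding nz_def g2_def by (auto intro!: tri_neg)

lemma ftop_rec: "ftop a b j - ftop (a-1) b j - ftop a (b-1) j = ffree a (b-1) j"
proof -
  have "ftop a b j - ftop (a-1) b j - ftop a (b-1) j =
     (\<Sum>r\<in>{1..j}. tri (a-r) (j+1) (b-j-1+r) - tri (a-r-1) (j+1) (b-j-1+r) - tri (a-r) (j+1) (b-j-1+r-1))"
    unfolding ftop_def sum_subtractf by (simp add: algebra_simps)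
  also have "\<dots> = (\<Sum>r\<in>{1..j}. tri (a-r) j (b-1-j+r))"
  proof (rule sum.cong)
    fix r assume r: "r \<in> {1..j}"
    show "tri (a-r) (j+1) (b-j-1+r) - tri (a-r-1) (j+1) (b-j-1+r) - tri (a-r) (j+1) (b-j-1+r-1) = tri (a-r) j (b-1-j+r)"
      using tri_pascal[of "a-r" "j+1" "b-j-1+r"] r by (simp add: algebra_simps)
  qed simp
  finally show ?thesis by (simp add: ffree_def)
qed

lemma fbot_rec: "fbot a b j - fbot (a-1) b j - fbot a (b-1) j = ffree (a-1) b j"
proof -
  have "fbot a b j - fbot (a-1) b j - fbot a (b-1) j =
     (\<Sum>r\<in>{1..j}. tri (a-1-r) (j+1) (b-j+r) - tri (a-1-r-1) (j+1) (b-j+r) - tri (a-1-r) (j+1) (b-j+r-1))"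
    unfolding fbot_def sum_subtractf by (simp add: algebra_simps)
  also have "\<dots> = (\<Sum>r\<in>{1..j}. tri (a-1-r) j (b-j+r))"
  proof (rule sum.cong)
    fix r assume r: "r \<in> {1..j}"
    show "tri (a-1-r) (j+1) (b-j+r) - tri (a-1-r-1) (j+1) (b-j+r) - tri (a-1-r) (j+1) (b-j+r-1) = tri (a-1-r) j (b-j+r)"
      using tri_pascal[of "a-1-r" "j+1" "b-j+r"] r by (simp add: algebra_simps)
  qed simp
  finally show ?thesis by (simp add: ffree_def)
qed

lemma ffree_rec: "ffree a b j - ffree (a-1) b j - ffree a (b-1) j - ffree a (b-1) (j-1) = g2 a b j"
proof (cases "j \<ge> 1")
  case True
  have "ffree a b j - ffree (a-1) b j - ffree a (b-1) j =
     (\<Sum>r\<in>{1..j}. tri (a-r) j (b-j+r) - tri (a-r-1) j (b-j+r) - tri (a-r) j (b-j+r-1))"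
    unfolding ffree_def sum_subtractf by (simp add: algebra_simps)
  also have "\<dots> = (\<Sum>r\<in>{1..j}. tri (a-r) (j-1) (b-j+r))"
  proof (rule sum.cong)
    fix r assume r: "r \<in> {1..j}"
    show "tri (a-r) j (b-j+r) - tri (a-r-1) j (b-j+r) - tri (a-r) j (b-j+r-1) = tri (a-r) (j-1) (b-j+r)"
      using tri_pascal[of "a-r" "j" "b-j+r"] r by (simp add: algebra_simps)
  qed simp
  also have "\<dots> = tri (a-j) (j-1) b + (\<Sum>r\<in>{1..j-1}. tri (a-r) (j-1) (b-j+r))"
  proof -
    have "{1..j} = insert (1 + (j-1)) {1..j-1}" using True atLeastAtMostPlus1_int_conv[of 1 "j-1"] by simp
    then show ?thesis by simp
  qed
  also have "(\<Sum>r\<in>{1..j-1}. tri (a-r) (j-1) (b-j+r)) = ffree a (b-1) (j-1)"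
    unfolding ffree_def by (rule sum.cong) (auto simp: algebra_simps)
  finally show ?thesis by (simp add: g2_def)
next
  case False
  then show ?thesis by (simp add: ffree_def g2_def tri_neg)
qed

lemma g2_rec: "g2 a b j - g2 (a-1) b j - g2 a (b-1) j - g2 (a-1) b (j-1) = (if a = 1 \<and> b = 0 \<and> j = 1 then 1 else 0)"
proof (cases "a - j = 0 \<and> j - 1 = 0 \<and> b = 0")
  case True
  then show ?thesis by (auto simp: g2_def tri_def M_def)
next
  case False
  then show ?thesis using tri_pascal[of "a-j" "j-1" b] by (auto simp: g2_def algebra_simps)
qed

lemma gall_rec: "gall a b j - gall (a-1) b j - gall a (b-1) j = ffree a b j"
  using ftop_rec[of a b j] fbot_rec[of a b j] unfolding gall_def
  by (simp add: algebra_simps)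

lemma series_identity:
  "mk gall * ((1 - varX - varY) * (1 - varX - varY - varX * varT) * (1 - varX - varY - varY * varT))
     = varX * varT"
proof -
  have 1: "mk gall * (1 - varX - varY) = mk ffree"
    by (rule fps3_eqI) (simp add: mk_step1 nz_gall gall_rec)
  have 2: "mk ffree * (1 - varX - varY - varY * varT) = mk g2"
    by (rule fps3_eqI) (simp add: mk_step3 nz_ffree ffree_rec)
  have 3: "mk g2 * (1 - varX - varY - varX * varT) = varX * varT"
    by (rule fps3_eqI) (simp add: mk_step2 nz_g2 g2_rec coeff3_XT)
  have "mk gall * ((1 - varX - varY) * (1 - varX - varY - varX * varT) * (1 - varX - varY - varY * varT))
      = ((mk gall * (1 - varX - varY)) * (1 - varX - varY - varY * varT)) * (1 - varX - varY - varX * varT)"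
    by (simp only: ac_simps)
  then show ?thesis by (simp only: 1 2 3)
qed

lemma gall_zero: "a = 0 \<or> j = 0 \<or> a + b < j \<Longrightarrow> gall (int a) (int b) (int j) = 0"
proof -
  assume h: "a = 0 \<or> j = 0 \<or> a + b < j"
  have t1: "\<And>r. r\<in>{1..int j} \<Longrightarrow> tri (int a - r) (int j) (int b - int j + r) = 0"
    using h by (intro tri_neg) auto
  have t2: "\<And>r. r\<in>{1..int j} \<Longrightarrow> tri (int a - r) (int j + 1) (int b - int j - 1 + r) = 0"
    using h by (intro tri_neg) auto
  have t3: "\<And>r. r\<in>{1..int j} \<Longrightarrow> tri (int a - 1 - r) (int j + 1) (int b - int j + r) = 0"
    using h by (intro tri_neg) auto
  show ?thesis unfolding gall_def ffree_def ftop_def fbot_def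
    using t1 t2 t3 by simp
qed

definition polyh :: "'i set \<Rightarrow> ('i \<Rightarrow> 'v::euclidean_space) \<Rightarrow> ('i \<Rightarrow> real) \<Rightarrow> 'v set" where
  "polyh I a b = {x. \<forall>i\<in>I. a i \<bullet> x \<le> b i}"
definition tight :: "'i set \<Rightarrow> ('i \<Rightarrow> 'v::euclidean_space) \<Rightarrow> ('i \<Rightarrow> real) \<Rightarrow> 'v \<Rightarrow> 'i set" where
  "tight I a b x = {i\<in>I. a i \<bullet> x = b i}"
definition hyp :: "('i \<Rightarrow> 'v::euclidean_space) \<Rightarrow> ('i \<Rightarrow> real) \<Rightarrow> 'i set \<Rightarrow> 'v set" where
  "hyp a b J = {y. \<forall>i\<in>J. a i \<bullet> y = b i}"

lemma affine_hyp: "affine (hyp a b J)"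
  unfolding affine_alt hyp_def by (auto simp: inner_add_right algebra_simps)

lemma perturb:
  assumes fin: "finite I" and x: "x \<in> polyh I a b" and z: "z \<in> hyp a b (tight I a b x)"
  shows "\<exists>e>0. \<forall>t. \<bar>t\<bar> \<le> e \<longrightarrow> x + t *\<^sub>R (z - x) \<in> polyh I a b"
proof -
  define K where "K = I - tight I a b x"
  define E where "E = insert 1 ((\<lambda>i. (b i - a i \<bullet> x) / (\<bar>a i \<bullet> (z - x)\<bar> + 1)) ` K)"
  have finE: "finite E" "E \<noteq> {}" using fin by (auto simp: E_def K_def)
  have Kpos: "\<And>i. i \<in> K \<Longrightarrow> a i \<bullet> x < b i"
    using x by (force simp: K_def tight_def polyh_def)
  have "\<forall>e\<in>E. e > 0" using Kpos by (auto simp: E_def)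
  then have epos: "Min E > 0" using finE by simp
  show ?thesis
  proof (intro exI[of _ "Min E"] conjI allI impI epos)
    fix t assume t: "\<bar>t\<bar> \<le> Min E"
    show "x + t *\<^sub>R (z - x) \<in> polyh I a b"
      unfolding polyh_def
    proof (intro CollectI ballI)
      fix i assume i: "i \<in> I"
      show "a i \<bullet> (x + t *\<^sub>R (z - x)) \<le> b i"
      proof (cases "i \<in> K")
        case False
        then have "a i \<bullet> x = b i" "a i \<bullet> z = b i" using i z by (auto simp: K_def tight_def hyp_def)
        then show ?thesis by (simp add: inner_add_right inner_diff_right)
      next
        case True
        define c where "c = \<bar>a i \<bullet> (z - x)\<bar>"
        define d where "d = b i - a i \<bullet> x"
        have d: "d > 0" using Kpos[OF True] by (simp add: d_def)
        have "Min E \<le> d / (c + 1)" using finE True by (auto simp: E_def c_def d_def)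
        then have "\<bar>t\<bar> \<le> d / (c+1)" using t by simp
        then have "\<bar>t\<bar> * (c + 1) \<le> d" by (simp add: field_simps c_def)
        moreover have "\<bar>t\<bar> * c \<le> \<bar>t\<bar> * (c+1)" using mult_left_mono[of c "c+1" "\<bar>t\<bar>"] by simp
        ultimately have "\<bar>t\<bar> * c \<le> d" by linarith
        moreover have "t * (a i \<bullet> (z - x)) \<le> \<bar>t\<bar> * c"
          unfolding c_def by (metis abs_ge_self abs_mult)
        ultimately show ?thesis by (simp add: inner_add_right d_def)
      qed
    qed
  qed
qed

lemma face_sub:
  assumes fin: "finite I" and F: "F face_of polyh I a b" and x: "x \<in> F"
    and z: "z \<in> polyh I a b" "z \<in> hyp a b (tight I a b x)"
  shows "z \<in> F"
proof (cases "z = x")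
  case True then show ?thesis using x by simp
next
  case False
  have xP: "x \<in> polyh I a b" using F x face_of_imp_subset by blast
  obtain e where e: "e > 0" "\<And>t. \<bar>t\<bar> \<le> e \<Longrightarrow> x + t *\<^sub>R (z - x) \<in> polyh I a b"
    using perturb[OF fin xP z(2)] by blast
  define w where "w = x + (-e) *\<^sub>R (z - x)"
  have w: "w \<in> polyh I a b" using e(2)[of "-e"] e(1) unfolding w_def by simp
  have "x \<in> open_segment z w"
    unfolding in_segment
  proof
    show "z \<noteq> w"
    proof
      assume "z = w"
      then have "(1 + e) *\<^sub>R (z - x) = 0" by (simp add: w_def algebra_simps)
      then show False using False e by simp
    qed
    show "\<exists>u>0. u < 1 \<and> x = (1 - u) *\<^sub>R z + u *\<^sub>R w"
    proof (intro exI[of _ "1/(1+e)"] conjI)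
      show "x = (1 - 1/(1+e)) *\<^sub>R z + (1/(1+e)) *\<^sub>R w"
      proof -
        have h: "w = (1+e) *\<^sub>R x - e *\<^sub>R z" by (simp add: w_def algebra_simps)
        have c1: "1 - 1/(1+e) = e/(1+e)" using e by (simp add: field_simps)
        have c2: "(1/(1+e)) * (1+e) = 1" using e by simp
        have c3: "1/(1+e)*e = e/(1+e)" by simp
        have ne: "1 + e \<noteq> 0" using e by simp
        show ?thesis using ne by (simp add: h c1 scaleR_diff_right c2 c3)
      qed
    qed (use e in auto)
  qed
  then show ?thesis using face_ofD[OF F _ z(1) w x] by blast
qed

lemma rel_min:
  assumes F: "F face_of polyh I a b" and x: "x \<in> rel_interior F" and y: "y \<in> F"
  shows "tight I a b x \<subseteq> tight I a b y"
proof
  fix i assume i: "i \<in> tight I a b x"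
  have cF: "convex F" using F face_of_imp_convex by blast
  have yA: "y \<in> affine hull F" by (rule hull_inc[OF y])
  have "\<exists>m. m > 1 \<and> (\<forall>e. e > 1 \<and> e \<le> m \<longrightarrow> (1 - e) *\<^sub>R y + e *\<^sub>R x \<in> F)"
    using bspec[OF convex_rel_interior_if[OF cF x] yA] .
  then obtain m where m1: "m > 1" and m2: "\<forall>e. e > 1 \<and> e \<le> m \<longrightarrow> (1 - e) *\<^sub>R y + e *\<^sub>R x \<in> F"
    by blast
  have "(1 - m) *\<^sub>R y + m *\<^sub>R x \<in> F" using m2 m1 by simp
  then have "(1 - m) *\<^sub>R y + m *\<^sub>R x \<in> polyh I a b" using F face_of_imp_subset by blast
  then have "a i \<bullet> ((1 - m) *\<^sub>R y + m *\<^sub>R x) \<le> b i" using i by (auto simp: polyh_def tight_def)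
  moreover have "a i \<bullet> x = b i" "i \<in> I" using i by (auto simp: tight_def)
  ultimately have "(1 - m) * (a i \<bullet> y - b i) \<le> 0"
    by (simp add: inner_add_right algebra_simps)
  then have "a i \<bullet> y \<ge> b i"
  proof -
    have "(m - 1) * (a i \<bullet> y - b i) \<ge> 0" using \<open>(1 - m) * (a i \<bullet> y - b i) \<le> 0\<close> by (simp add: algebra_simps)
    then show ?thesis using m1 by (simp add: zero_le_mult_iff)
  qed
  moreover have "y \<in> polyh I a b" using y F face_of_imp_subset by blast
  then have "a i \<bullet> y \<le> b i" using \<open>i \<in> I\<close> unfolding polyh_def by blast
  ultimately show "i \<in> tight I a b y" using \<open>i\<in>I\<close> unfolding tight_def by simp
qed

lemma convex_polyh: "convex (polyh I a b)"
proof -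
  have "polyh I a b = (\<Inter>i\<in>I. {x. a i \<bullet> x \<le> b i})" by (auto simp: polyh_def)
  then show ?thesis by (simp add: convex_INT convex_halfspace_le)
qed

lemma convex_hyp: "convex (hyp a b J)"
  using affine_hyp affine_imp_convex by blast

lemma face_hyp:
  assumes J: "J \<subseteq> I"
  shows "polyh I a b \<inter> hyp a b J face_of polyh I a b"
  unfolding face_of_def
proof (intro conjI ballI impI)
  show "convex (polyh I a b \<inter> hyp a b J)" by (intro convex_Int convex_polyh convex_hyp)
  show "polyh I a b \<inter> hyp a b J \<subseteq> polyh I a b" by blast
next
  fix u v p assume u: "u \<in> polyh I a b" and v: "v \<in> polyh I a b"
    and p: "p \<in> polyh I a b \<inter> hyp a b J" and seg: "p \<in> open_segment u v"
  obtain t where t: "0 < t" "t < 1" "p = (1 - t) *\<^sub>R u + t *\<^sub>R v"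
    using seg unfolding in_segment by blast
  have both: "a i \<bullet> u = b i \<and> a i \<bullet> v = b i" if i: "i \<in> J" for i
  proof -
    have au: "a i \<bullet> u \<le> b i" and av: "a i \<bullet> v \<le> b i" using u v i J by (auto simp: polyh_def)
    have "a i \<bullet> p = b i" using p i by (auto simp: hyp_def)
    then have eq: "(1 - t) * (b i - a i \<bullet> u) + t * (b i - a i \<bullet> v) = 0"
      using t(3) by (simp add: inner_add_right algebra_simps)
    have h1: "(1 - t) * (b i - a i \<bullet> u) \<ge> 0" using t au by simp
    have h2: "t * (b i - a i \<bullet> v) \<ge> 0" using t av by simp
    have "(1 - t) * (b i - a i \<bullet> u) = 0" "t * (b i - a i \<bullet> v) = 0" using eq h1 h2 by linarith+
    then show ?thesis using t by auto
  qed
  show "u \<in> polyh I a b \<inter> hyp a b J" using u both unfolding hyp_def by blast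
  show "v \<in> polyh I a b \<inter> hyp a b J" using v both unfolding hyp_def by blast
qed

lemma tight_sub: "tight I a b x \<subseteq> I" by (auto simp: tight_def)

lemma x_in_hyp: "x \<in> hyp a b (tight I a b x)" by (auto simp: tight_def hyp_def)

lemma aff_hull_eq:
  assumes fin: "finite I" and x: "x \<in> polyh I a b"
  shows "affine hull (polyh I a b \<inter> hyp a b (tight I a b x)) = hyp a b (tight I a b x)"
proof
  show "affine hull (polyh I a b \<inter> hyp a b (tight I a b x)) \<subseteq> hyp a b (tight I a b x)"
    by (intro hull_minimal affine_hyp) auto
  show "hyp a b (tight I a b x) \<subseteq> affine hull (polyh I a b \<inter> hyp a b (tight I a b x))"
  proof
    fix z assume z: "z \<in> hyp a b (tight I a b x)"
    obtain e where e: "e > 0" "\<And>t. \<bar>t\<bar> \<le> e \<Longrightarrow> x + t *\<^sub>R (z - x) \<in> polyh I a b"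
      using perturb[OF fin x z] by blast
    define w where "w = x + e *\<^sub>R (z - x)"
    have wP: "w \<in> polyh I a b" using e unfolding w_def by simp
    have wH: "w \<in> hyp a b (tight I a b x)" using z x_in_hyp[of x a b I]
      by (auto simp: w_def hyp_def inner_add_right inner_diff_right)
    let ?A = "affine hull (polyh I a b \<inter> hyp a b (tight I a b x))"
    have xA: "x \<in> ?A" by (intro hull_inc) (use x x_in_hyp in auto)
    have wA: "w \<in> ?A" by (intro hull_inc) (use wP wH in auto)
    have "(1 - 1/e) *\<^sub>R x + (1/e) *\<^sub>R w \<in> ?A"
      by (rule mem_affine[OF affine_affine_hull xA wA]) simp
    moreover have "(1 - 1/e) *\<^sub>R x + (1/e) *\<^sub>R w = z"
      using e by (simp add: w_def algebra_simps)
    ultimately show "z \<in> ?A" by simp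
  qed
qed

definition Tsets :: "'i set \<Rightarrow> ('i \<Rightarrow> 'v::euclidean_space) \<Rightarrow> ('i \<Rightarrow> real) \<Rightarrow> 'i set set" where
  "Tsets I a b = {tight I a b x | x. x \<in> polyh I a b}"

lemma faces_card:
  fixes a :: "'i \<Rightarrow> 'v::euclidean_space"
  assumes fin: "finite I"
  shows "card {F. F face_of polyh I a b \<and> aff_dim F = int j}
       = card {J \<in> Tsets I a b. aff_dim (hyp a b J) = int j}"
proof -
  define \<Phi> where "\<Phi> J = polyh I a b \<inter> hyp a b J" for J
  have inj: "inj_on \<Phi> (Tsets I a b)"
  proof (rule inj_onI)
    fix J1 J2 assume J1: "J1 \<in> Tsets I a b" and J2: "J2 \<in> Tsets I a b" and eq: "\<Phi> J1 = \<Phi> J2"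
    have rec: "{i\<in>I. \<Phi> J \<subseteq> {y. a i \<bullet> y = b i}} = J" if JT: "J \<in> Tsets I a b" for J
    proof -
      obtain x where x: "x \<in> polyh I a b" "J = tight I a b x" using JT unfolding Tsets_def by blast
      have xJ: "x \<in> \<Phi> J" using x x_in_hyp[of x a b I] by (simp add: \<Phi>_def)
      show ?thesis
      proof (intro equalityI subsetI)
        fix i assume "i \<in> {i\<in>I. \<Phi> J \<subseteq> {y. a i \<bullet> y = b i}}"
        then have "i \<in> I" "a i \<bullet> x = b i" using xJ by blast+
        then show "i \<in> J" using x(2) unfolding tight_def by blast
      next
        fix i assume i: "i \<in> J"
        have "i \<in> I" using i x(2) unfolding tight_def by blast
        moreover have "\<Phi> J \<subseteq> {y. a i \<bullet> y = b i}" using i unfolding \<Phi>_def hyp_def by blast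
        ultimately show "i \<in> {i\<in>I. \<Phi> J \<subseteq> {y. a i \<bullet> y = b i}}" by blast
      qed
    qed
    show "J1 = J2" using rec[OF J1] rec[OF J2] eq by metis
  qed
  have img: "{F. F face_of polyh I a b \<and> aff_dim F = int j} = \<Phi> ` {J \<in> Tsets I a b. aff_dim (hyp a b J) = int j}"
  proof (intro equalityI subsetI)
    fix F assume "F \<in> {F. F face_of polyh I a b \<and> aff_dim F = int j}"
    then have F: "F face_of polyh I a b" and d: "aff_dim F = int j" by auto
    have "F \<noteq> {}" using d by auto
    moreover have cF: "convex F" using F face_of_imp_convex by blast
    ultimately obtain x where x: "x \<in> rel_interior F" using rel_interior_eq_empty by blast
    have xF: "x \<in> F" using x rel_interior_subset by blast
    have xP: "x \<in> polyh I a b" using xF F face_of_imp_subset by blast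
    have FE: "F = \<Phi> (tight I a b x)"
    proof
      show "F \<subseteq> \<Phi> (tight I a b x)"
      proof
        fix y assume y: "y \<in> F"
        have "tight I a b x \<subseteq> tight I a b y" using rel_min[OF F x y] .
        then have "y \<in> hyp a b (tight I a b x)" unfolding hyp_def tight_def by blast
        moreover have "y \<in> polyh I a b" using y F face_of_imp_subset by blast
        ultimately show "y \<in> \<Phi> (tight I a b x)" by (simp add: \<Phi>_def)
      qed
      show "\<Phi> (tight I a b x) \<subseteq> F"
        unfolding \<Phi>_def using face_sub[OF fin F xF] by blast
    qed
    have "aff_dim (hyp a b (tight I a b x)) = int j"
      using aff_hull_eq[OF fin xP] d FE aff_dim_affine_hull by (metis \<Phi>_def)
    moreover have "tight I a b x \<in> Tsets I a b" using xP unfolding Tsets_def by blast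
    ultimately show "F \<in> \<Phi> ` {J \<in> Tsets I a b. aff_dim (hyp a b J) = int j}"
      using FE by blast
  next
    fix F assume "F \<in> \<Phi> ` {J \<in> Tsets I a b. aff_dim (hyp a b J) = int j}"
    then obtain x where x: "x \<in> polyh I a b" and F: "F = \<Phi> (tight I a b x)"
       and d: "aff_dim (hyp a b (tight I a b x)) = int j" unfolding Tsets_def by blast
    have "F face_of polyh I a b" using face_hyp[OF tight_sub] F by (simp add: \<Phi>_def)
    moreover have "aff_dim F = int j"
      using aff_hull_eq[OF fin x] d F aff_dim_affine_hull by (metis \<Phi>_def)
    ultimately show "F \<in> {F. F face_of polyh I a b \<and> aff_dim F = int j}" by simp
  qed
  show ?thesis unfolding img by (rule card_image) (rule inj_on_subset[OF inj], blast)
qed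

lemma dim_sub: "dim {v::real^'n. \<forall>i. i \<notin> Cs \<longrightarrow> v$i = 0} = card Cs"
  using dim_substandard_cart[of Cs, where 'a=real] by (simp add: dim_vec_eq)

lemma subspace_sub: "subspace {v::real^'n. \<forall>i. i \<notin> Cs \<longrightarrow> v$i = 0}"
  unfolding subspace_def by auto

lemma subspace_sub0: "subspace {v::real^'n. (\<forall>i. i \<notin> Cs \<longrightarrow> v$i = 0) \<and> (\<Sum>i\<in>UNIV. v$i) = 0}"
  unfolding subspace_def by (auto simp: sum.distrib sum_distrib_left[symmetric])

lemma dim_sub0:
  assumes "Cs \<noteq> {}"
  shows "dim {v::real^'n. (\<forall>i. i \<notin> Cs \<longrightarrow> v$i = 0) \<and> (\<Sum>i\<in>UNIV. v$i) = 0} = card Cs - 1"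
proof -
  obtain c0 where c0: "c0 \<in> Cs" using assms by blast
  define S where "S = {v::real^'n. (\<forall>i. i \<notin> Cs \<longrightarrow> v$i = 0) \<and> (\<Sum>i\<in>UNIV. v$i) = 0}"
  define T where "T = {v::real^'n. \<forall>i. i \<notin> {c0} \<longrightarrow> v$i = 0}"
  have sS: "subspace S" unfolding S_def by (rule subspace_sub0)
  have sT: "subspace T" unfolding T_def by (rule subspace_sub)
  have ax: "(axis c0 (1::real)) $ i = (if i = c0 then 1 else 0)" for i by (simp add: axis_def)
  have sumax: "(\<Sum>i\<in>UNIV. (axis c0 (1::real)) $ i) = 1" by (simp add: ax)
  have sumeq: "{x + y |x y. x \<in> S \<and> y \<in> T} = {v::real^'n. \<forall>i. i \<notin> Cs \<longrightarrow> v$i = 0}"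
  proof (intro equalityI subsetI)
    fix v assume "v \<in> {x + y |x y. x \<in> S \<and> y \<in> T}"
    then obtain x y where "v = x + y" "x \<in> S" "y \<in> T" by blast
    then show "v \<in> {v::real^'n. \<forall>i. i \<notin> Cs \<longrightarrow> v$i = 0}" using c0 by (auto simp: S_def T_def)
  next
    fix v :: "real^'n" assume v: "v \<in> {v::real^'n. \<forall>i. i \<notin> Cs \<longrightarrow> v$i = 0}"
    define s where "s = (\<Sum>i\<in>UNIV. v$i)"
    define x where "x = v - s *\<^sub>R axis c0 1"
    define y where "y = s *\<^sub>R axis c0 (1::real)"
    have "x \<in> S"
    proof -
      have "(\<Sum>i\<in>UNIV. x$i) = s - s * (\<Sum>i\<in>UNIV. (axis c0 (1::real)) $ i)"
        by (simp add: x_def s_def sum_subtractf sum_distrib_left)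
      then show ?thesis using v c0 by (auto simp: S_def x_def sumax ax)
    qed
    moreover have "y \<in> T" by (simp add: T_def y_def ax)
    moreover have "v = x + y" by (simp add: x_def y_def)
    ultimately show "v \<in> {x + y |x y. x \<in> S \<and> y \<in> T}" by blast
  qed
  have int0: "S \<inter> T = {0}"
  proof (intro equalityI subsetI)
    fix v assume v: "v \<in> S \<inter> T"
    have "(\<Sum>i\<in>UNIV. v$i) = v $ c0"
      using v by (subst sum.remove[of _ c0]) (auto simp: T_def intro!: sum.neutral)
    then have "v $ c0 = 0" using v by (simp add: S_def)
    then show "v \<in> {0}" using v by (auto simp: T_def vec_eq_iff)
  next
    fix v assume "v \<in> {0::real^'n}"
    then show "v \<in> S \<inter> T" by (simp add: S_def T_def)
  qed
  have dT: "dim T = 1" unfolding T_def using dim_sub[of "{c0}"] by simp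
  have "dim {v::real^'n. \<forall>i. i \<notin> Cs \<longrightarrow> v$i = 0} + dim (S \<inter> T) = dim S + dim T"
    using dim_sums_Int[OF sS sT] unfolding sumeq .
  then have "card Cs = dim S + 1" using dim_sub[of Cs] dT int0 by simp
  then show ?thesis unfolding S_def by simp
qed

datatype 'n cidx = Lo 'n | Hi 'n | SH | SL

lemma UNIV_cidx: "(UNIV :: 'n cidx set) = range Lo \<union> range Hi \<union> {SH, SL}"
proof (intro equalityI subsetI)
  fix c :: "'n cidx" show "c \<in> range Lo \<union> range Hi \<union> {SH, SL}" by (cases c) auto
qed simp

lemma finite_cidx: "finite (UNIV :: ('n::finite) cidx set)"
  unfolding UNIV_cidx by simp

lemma all_cidx: "(\<forall>c::'n cidx. P c) \<longleftrightarrow> (\<forall>i. P (Lo i)) \<and> (\<forall>i. P (Hi i)) \<and> P SH \<and> P SL"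
  by (metis cidx.exhaust)

abbreviation sig :: "real^'n::finite \<Rightarrow> real" where "sig x \<equiv> (\<Sum>i\<in>UNIV. x$i)"

fun ca :: "'n::finite cidx \<Rightarrow> real^'n" where
  "ca (Lo i) = - axis i 1" | "ca (Hi i) = axis i 1" | "ca SH = (\<chi> i. 1)" | "ca SL = - (\<chi> i. 1)"

fun cb :: "nat \<Rightarrow> 'n cidx \<Rightarrow> real" where
  "cb k (Lo i) = 0" | "cb k (Hi i) = 1" | "cb k SH = real k" | "cb k SL = 1 - real k"

lemma inner_ones [simp]: "(\<chi> i. 1) \<bullet> x = sig x"
  by (simp add: inner_vec_def)

lemma inner_axis1 [simp]: "axis i 1 \<bullet> (x::real^'n::finite) = x$i"
  by (simp add: inner_axis')

lemma inner_ca [simp]: "ca (Lo i) \<bullet> x = - x$i" "ca (Hi i) \<bullet> x = x$i" "ca SH \<bullet> x = sig x" "ca SL \<bullet> x = - sig x"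
proof -
  show "ca (Lo i) \<bullet> x = - x$i" by (simp add: inner_axis')
  show "ca (Hi i) \<bullet> x = x$i" by (simp add: inner_axis')
  show "ca SH \<bullet> x = sig x" by (simp add: inner_vec_def)
  show "ca SL \<bullet> x = - sig x" by (simp add: inner_vec_def sum_negf)
qed

lemma Delta_polyh: "Delta k = polyh UNIV ca (cb k)"
  unfolding Delta_def polyh_def Ball_def
  by (simp only: all_cidx) (auto simp: algebra_simps)

definition Jof :: "'n set \<Rightarrow> 'n set \<Rightarrow> nat \<Rightarrow> 'n cidx set" where
  "Jof Os Cs t = Lo ` (- (Os \<union> Cs)) \<union> Hi ` Os \<union> (if t = 1 then {SH} else {}) \<union> (if t = 2 then {SL} else {})"

lemma hyp_Jof: "hyp ca (cb k) (Jof Os Cs t) = {y. (\<forall>i. i \<notin> Os \<union> Cs \<longrightarrow> y$i = 0) \<and> (\<forall>i\<in>Os. y$i = 1)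
   \<and> (t = 1 \<longrightarrow> sig y = real k) \<and> (t = 2 \<longrightarrow> sig y = real k - 1)}"
proof -
  have m: "c \<in> Jof Os Cs t \<longleftrightarrow> (\<exists>i. i \<notin> Os \<union> Cs \<and> c = Lo i) \<or> (\<exists>i\<in>Os. c = Hi i) \<or> (t = 1 \<and> c = SH) \<or> (t = 2 \<and> c = SL)" for c
    by (auto simp: Jof_def)
  show ?thesis unfolding hyp_def Ball_def m by (auto simp: algebra_simps)
qed

lemma tight_Delta:
  assumes "x \<in> Delta k"
  shows "tight UNIV ca (cb k) x = Jof {i. x$i = 1} (- {i. x$i = 1} \<inter> - {i. x$i = 0})
     (if sig x = real k then 1 else if sig x = real k - 1 then 2 else 0)"
proof (intro equalityI subsetI)
  fix c assume "c \<in> tight UNIV ca (cb k) x"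
  then show "c \<in> Jof {i. x$i = 1} (- {i. x$i = 1} \<inter> - {i. x$i = 0})
     (if sig x = real k then 1 else if sig x = real k - 1 then 2 else 0)"
    by (cases c) (auto simp: tight_def Jof_def)
next
  fix c assume "c \<in> Jof {i. x$i = 1} (- {i. x$i = 1} \<inter> - {i. x$i = 0})
     (if sig x = real k then 1 else if sig x = real k - 1 then 2 else 0)"
  then show "c \<in> tight UNIV ca (cb k) x"
    by (cases c) (auto simp: tight_def Jof_def split: if_splits)
qed

lemma affdim_Jof:
  assumes x: "x \<in> hyp ca (cb k) (Jof Os Cs t)" and dj: "Os \<inter> Cs = {}"
  shows "aff_dim (hyp ca (cb k) (Jof Os Cs t)) =
     (if t \<in> {1,2} then (if Cs = {} then 0 else int (card Cs) - 1) else int (card Cs))"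
proof -
  let ?H = "hyp ca (cb k) (Jof Os Cs t)"
  define V where "V = {v::real^'a. (\<forall>i. i \<notin> Cs \<longrightarrow> v$i = 0) \<and> (t \<in> {1,2} \<longrightarrow> sig v = 0)}"
  have img: "(+) (- x) ` ?H = V"
  proof (intro equalityI subsetI)
    fix v assume "v \<in> (+) (- x) ` ?H"
    then obtain y where y: "y \<in> ?H" "v = y - x" by auto
    have sv: "sig v = sig y - sig x" using y(2) by (simp add: sum_subtractf)
    have xH: "(\<forall>i. i \<notin> Os \<union> Cs \<longrightarrow> x$i = 0) \<and> (\<forall>i\<in>Os. x$i = 1)
      \<and> (t = 1 \<longrightarrow> sig x = real k) \<and> (t = 2 \<longrightarrow> sig x = real k - 1)" using x unfolding hyp_Jof by blast
    have yH: "(\<forall>i. i \<notin> Os \<union> Cs \<longrightarrow> y$i = 0) \<and> (\<forall>i\<in>Os. y$i = 1)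
      \<and> (t = 1 \<longrightarrow> sig y = real k) \<and> (t = 2 \<longrightarrow> sig y = real k - 1)" using y(1) unfolding hyp_Jof by blast
    have "v$i = 0" if "i \<notin> Cs" for i
    proof (cases "i \<in> Os")
      case True then show ?thesis using xH yH y(2) by simp
    next
      case False then show ?thesis using xH yH y(2) that by simp
    qed
    moreover have "t \<in> {1,2} \<longrightarrow> sig v = 0" using xH yH sv by auto
    ultimately show "v \<in> V" unfolding V_def by blast
  next
    fix v assume v: "v \<in> V"
    have sv: "sig (v + x) = sig v + sig x" by (simp add: sum.distrib)
    have "v + x \<in> ?H" using x v dj sv unfolding hyp_Jof V_def by auto
    moreover have "v = - x + (v + x)" by simp
    ultimately show "v \<in> (+) (- x) ` ?H" by blast
  qed
  have "aff_dim ?H = int (dim V)"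
    using aff_dim_eq_dim[of x ?H] hull_inc[OF x] img by simp
  moreover have "dim V = (if t \<in> {1,2} then (if Cs = {} then 0 else card Cs - 1) else card Cs)"
  proof (cases "t \<in> {1,2}")
    case True
    show ?thesis
    proof (cases "Cs = {}")
      case True
      have "V \<subseteq> {0}" using True \<open>t \<in> {1,2}\<close> by (auto simp: V_def vec_eq_iff)
      then show ?thesis using True \<open>t \<in> {1,2}\<close> by simp
    next
      case False
      have "V = {v::real^'a. (\<forall>i. i \<notin> Cs \<longrightarrow> v$i = 0) \<and> sig v = 0}" using \<open>t \<in> {1,2}\<close> by (simp add: V_def)
      then show ?thesis using dim_sub0[OF False] False \<open>t \<in> {1,2}\<close> by simp
    qed
  next
    case False
    then have "V = {v::real^'a. \<forall>i. i \<notin> Cs \<longrightarrow> v$i = 0}" by (simp add: V_def)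
    then show ?thesis using dim_sub[of Cs] False by simp
  qed
  ultimately show ?thesis
    by (auto simp: of_nat_diff card_gt_0_iff Suc_le_eq)
qed


lemma sum_split3:
  assumes "Os \<inter> Cs = {}"
  shows "(\<Sum>i\<in>(UNIV::'n::finite set). (if i \<in> Os then 1 else if i \<in> Cs then f i else 0)) = real (card Os) + sum f Cs"
proof -
  have "(\<Sum>i\<in>(UNIV::'n set). (if i \<in> Os then 1 else if i \<in> Cs then f i else 0))
      = (\<Sum>i\<in>UNIV \<inter> {i. i \<in> Os}. 1) + (\<Sum>i\<in>UNIV \<inter> - {i. i \<in> Os}. (if i \<in> Cs then f i else (0::real)))"
    by (rule sum.If_cases) simp
  also have "(\<Sum>i\<in>UNIV \<inter> - {i. i \<in> Os}. (if i \<in> Cs then f i else (0::real))) = sum f (- Os \<inter> Cs)"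
    by (simp add: sum.If_cases Int_commute)
  also have "- Os \<inter> Cs = Cs" using assms by blast
  finally show ?thesis by simp
qed

lemma sig_split:
  fixes x :: "real^'n::finite"
  assumes "x \<in> Delta k"
  defines "Os \<equiv> {i. x$i = 1}" and "Cs \<equiv> - {i. x$i = 1} \<inter> - {i. x$i = 0}"
  shows "sig x = real (card Os) + sum (\<lambda>i. x$i) Cs"
    and "0 \<le> sum (\<lambda>i. x$i) Cs" "sum (\<lambda>i. x$i) Cs \<le> real (card Cs)"
    and "Cs \<noteq> {} \<Longrightarrow> 0 < sum (\<lambda>i. x$i) Cs"
    and "Cs \<noteq> {} \<Longrightarrow> sum (\<lambda>i. x$i) Cs < real (card Cs)"
proof -
  have b: "0 \<le> x$i \<and> x$i \<le> 1" for i using assms(1) by (simp add: Delta_def)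
  have dj: "Os \<inter> Cs = {}" by (auto simp: Os_def Cs_def)
  have "x$i = (if i \<in> Os then 1 else if i \<in> Cs then x$i else 0)" for i by (auto simp: Os_def Cs_def)
  then have "sig x = (\<Sum>i\<in>UNIV. (if i \<in> Os then 1 else if i \<in> Cs then x$i else 0))" by (rule sum.cong[OF refl])
  then show "sig x = real (card Os) + sum (\<lambda>i. x$i) Cs" using sum_split3[OF dj] by simp
  show "0 \<le> sum (\<lambda>i. x$i) Cs" using b by (simp add: sum_nonneg)
  have "sum (\<lambda>i. x$i) Cs \<le> sum (\<lambda>i. 1) Cs" using b by (intro sum_mono) auto
  then show "sum (\<lambda>i. x$i) Cs \<le> real (card Cs)" by simp
  have strict: "0 < x$i \<and> x$i < 1" if "i \<in> Cs" for i using b[of i] that by (auto simp: Cs_def)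
  assume ne: "Cs \<noteq> {}"
  show "0 < sum (\<lambda>i. x$i) Cs" using sum_strict_mono[of Cs "\<lambda>i. 0" "\<lambda>i. x$i"] ne strict by simp
  show "sum (\<lambda>i. x$i) Cs < real (card Cs)" using sum_strict_mono[of Cs "\<lambda>i. x$i" "\<lambda>i. 1"] ne strict by simp
qed

definition Pset :: "int \<Rightarrow> nat \<Rightarrow> ('n set \<times> 'n set) set" where
  "Pset p c = {(Os, Cs). Os \<inter> Cs = {} \<and> int (card Os) = p \<and> card Cs = c}"

definition DD :: "nat \<Rightarrow> nat \<Rightarrow> ('n set \<times> 'n set \<times> nat) set" where
  "DD k j = (\<Union>r\<in>{1..int j}. (\<lambda>(Os,Cs). (Os,Cs,0)) ` Pset (int k - r) j
      \<union> (\<lambda>(Os,Cs). (Os,Cs,1)) ` Pset (int k - r) (j+1)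
      \<union> (\<lambda>(Os,Cs). (Os,Cs,2)) ` Pset (int k - 1 - r) (j+1))"

lemma DD_I0: "r \<in> {1..int j} \<Longrightarrow> (Os,Cs) \<in> Pset (int k - r) j \<Longrightarrow> (Os,Cs,0) \<in> DD k j"
  unfolding DD_def by (rule UN_I[of r]) (auto intro: image_eqI[of _ _ "(Os,Cs)"])
lemma DD_I1: "r \<in> {1..int j} \<Longrightarrow> (Os,Cs) \<in> Pset (int k - r) (j+1) \<Longrightarrow> (Os,Cs,1) \<in> DD k j"
  unfolding DD_def by (rule UN_I[of r]) (auto intro: image_eqI[of _ _ "(Os,Cs)"])
lemma DD_I2: "r \<in> {1..int j} \<Longrightarrow> (Os,Cs) \<in> Pset (int k - 1 - r) (j+1) \<Longrightarrow> (Os,Cs,2) \<in> DD k j"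
  unfolding DD_def by (rule UN_I[of r]) (auto intro: image_eqI[of _ _ "(Os,Cs)"])

lemma DD_mem: "(Os,Cs,t) \<in> DD k j \<longleftrightarrow> Os \<inter> Cs = {} \<and>
   ((t = 0 \<and> card Cs = j \<and> 1 \<le> int k - card Os \<and> int k - card Os \<le> j)
  \<or> (t = 1 \<and> card Cs = j + 1 \<and> 1 \<le> int k - card Os \<and> int k - card Os \<le> j)
  \<or> (t = 2 \<and> card Cs = j + 1 \<and> 1 \<le> int k - 1 - card Os \<and> int k - 1 - card Os \<le> j))" (is "_ \<longleftrightarrow> ?R")
proof -
  have "(Os,Cs,t) \<in> DD k j \<longleftrightarrow> (\<exists>r\<in>{1..int j}. Os \<inter> Cs = {} \<and>
     ((t = 0 \<and> card Cs = j \<and> int (card Os) = int k - r) \<or> (t = 1 \<and> card Cs = j + 1 \<and> int (card Os) = int k - r)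
     \<or> (t = 2 \<and> card Cs = j + 1 \<and> int (card Os) = int k - 1 - r)))"
  proof
    assume "(Os,Cs,t) \<in> DD k j"
    then show "\<exists>r\<in>{1..int j}. Os \<inter> Cs = {} \<and>
     ((t = 0 \<and> card Cs = j \<and> int (card Os) = int k - r) \<or> (t = 1 \<and> card Cs = j + 1 \<and> int (card Os) = int k - r)
     \<or> (t = 2 \<and> card Cs = j + 1 \<and> int (card Os) = int k - 1 - r))"
      unfolding DD_def Pset_def by auto
  next
    assume "\<exists>r\<in>{1..int j}. Os \<inter> Cs = {} \<and>
     ((t = 0 \<and> card Cs = j \<and> int (card Os) = int k - r) \<or> (t = 1 \<and> card Cs = j + 1 \<and> int (card Os) = int k - r)
     \<or> (t = 2 \<and> card Cs = j + 1 \<and> int (card Os) = int k - 1 - r))"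
    then obtain r where r: "r \<in> {1..int j}" and h: "Os \<inter> Cs = {} \<and>
     ((t = 0 \<and> card Cs = j \<and> int (card Os) = int k - r) \<or> (t = 1 \<and> card Cs = j + 1 \<and> int (card Os) = int k - r)
     \<or> (t = 2 \<and> card Cs = j + 1 \<and> int (card Os) = int k - 1 - r))" by blast
    then show "(Os,Cs,t) \<in> DD k j"
      using DD_I0[OF r, of Os Cs k] DD_I1[OF r, of Os Cs k] DD_I2[OF r, of Os Cs k]
      unfolding Pset_def by auto
  qed
  also have "\<dots> \<longleftrightarrow> ?R"
  proof
    assume "\<exists>r\<in>{1..int j}. Os \<inter> Cs = {} \<and>
     ((t = 0 \<and> card Cs = j \<and> int (card Os) = int k - r) \<or> (t = 1 \<and> card Cs = j + 1 \<and> int (card Os) = int k - r)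
     \<or> (t = 2 \<and> card Cs = j + 1 \<and> int (card Os) = int k - 1 - r))"
    then show ?R by auto
  next
    assume h: ?R
    show "\<exists>r\<in>{1..int j}. Os \<inter> Cs = {} \<and>
     ((t = 0 \<and> card Cs = j \<and> int (card Os) = int k - r) \<or> (t = 1 \<and> card Cs = j + 1 \<and> int (card Os) = int k - r)
     \<or> (t = 2 \<and> card Cs = j + 1 \<and> int (card Os) = int k - 1 - r))"
    proof (cases "t = 2")
      case True
      then show ?thesis using h by (intro bexI[of _ "int k - 1 - card Os"]) auto
    next
      case False
      then show ?thesis using h by (intro bexI[of _ "int k - card Os"]) auto
    qed
  qed
  finally show ?thesis .
qed


lemma Jof_inj:
  assumes dj: "Os \<inter> Cs = {}" "Os' \<inter> Cs' = {}" and t: "t \<le> 2" "t' \<le> 2"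
    and eq: "Jof Os Cs t = Jof Os' Cs' t'"
  shows "Os = Os' \<and> Cs = Cs' \<and> t = t'"
proof -
  have hO: "{i. Hi i \<in> Jof A B u} = A" for A B u by (auto simp: Jof_def)
  have hL: "{i. Lo i \<notin> Jof A B u} = A \<union> B" for A B u by (auto simp: Jof_def)
  have hSH: "SH \<in> Jof A B u \<longleftrightarrow> u = 1" for A B u by (auto simp: Jof_def)
  have hSL: "SL \<in> Jof A B u \<longleftrightarrow> u = 2" for A B u by (auto simp: Jof_def)
  have O: "Os = Os'" using hO[of Os Cs t] hO[of Os' Cs' t'] eq by simp
  have "Os \<union> Cs = Os' \<union> Cs'" using hL[of Os Cs t] hL[of Os' Cs' t'] eq by simp
  then have C: "Cs = Cs'" using O dj by blast
  have "t = 1 \<longleftrightarrow> t' = 1" "t = 2 \<longleftrightarrow> t' = 2" using hSH hSL eq by metis+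
  then have "t = t'" using t by linarith
  then show ?thesis using O C by simp
qed

lemma Tsets_eq:
  fixes k j :: nat
  assumes j: "1 \<le> j"
  shows "{J \<in> Tsets UNIV ca (cb k). aff_dim (hyp ca (cb k) J) = int j} = (\<lambda>(Os,Cs,t). Jof Os Cs t) ` (DD k j :: ('n::finite set \<times> 'n set \<times> nat) set)"
proof (intro equalityI subsetI)
  fix J :: "'n cidx set" assume "J \<in> {J \<in> Tsets UNIV ca (cb k). aff_dim (hyp ca (cb k) J) = int j}"
  then obtain x :: "real^'n" where xP: "x \<in> polyh UNIV ca (cb k)" and JX: "J = tight UNIV ca (cb k) x"
      and d: "aff_dim (hyp ca (cb k) J) = int j"
    unfolding Tsets_def by blast
  have xD: "x \<in> Delta k" using xP Delta_polyh by blast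
  define Os where "Os = {i. x$i = 1}"
  define Cs where "Cs = - {i. x$i = 1} \<inter> - {i. x$i = 0}"
  define t :: nat where "t = (if sig x = real k then 1 else if sig x = real k - 1 then 2 else 0)"
  have JJ: "J = Jof Os Cs t" using tight_Delta[OF xD] JX by (simp add: Os_def Cs_def t_def)
  have dj: "Os \<inter> Cs = {}" by (auto simp: Os_def Cs_def)
  have xh: "x \<in> hyp ca (cb k) (Jof Os Cs t)" using x_in_hyp[of x ca "cb k" UNIV] JJ JX by simp
  have ad: "(if t \<in> {1,2} then (if Cs = {} then 0 else int (card Cs) - 1) else int (card Cs)) = int j"
    using affdim_Jof[OF xh dj] d JJ by simp
  note ss = sig_split[OF xD, folded Os_def Cs_def]
  have bnd: "real k - 1 \<le> sig x" "sig x \<le> real k" using xD by (auto simp: Delta_def)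
  have "(Os, Cs, t) \<in> DD k j"
  proof (cases "t = 0")
    case True
    then have ne: "sig x \<noteq> real k" "sig x \<noteq> real k - 1" by (auto simp: t_def split: if_splits)
    have cC: "card Cs = j" using ad True by simp
    have "real (card Os) < real k" using ss(1,2) bnd ne by linarith
    then have a1: "card Os < k" by simp
    have "real k < real (card Os + j + 1)" using ss(1,3) bnd ne cC by simp
    then have a2: "k < card Os + j + 1" by (simp only: of_nat_less_iff)
    show ?thesis unfolding DD_mem using dj True cC a1 a2 by auto
  next
    case False
    then have t12: "t \<in> {1,2}"
      by (cases "sig x = real k"; cases "sig x = real k - 1") (auto simp: t_def)
    have Cne: "Cs \<noteq> {}" using ad t12 j by (auto split: if_splits)
    have cC: "card Cs = j + 1" using ad t12 Cne by auto
    have p1: "0 < sum (\<lambda>i. x$i) Cs" "sum (\<lambda>i. x$i) Cs < real (card Cs)" using ss(4,5) Cne by auto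
    show ?thesis
    proof (cases "t = 1")
      case True
      then have sk: "sig x = real k"
        by (cases "sig x = real k"; cases "sig x = real k - 1") (auto simp: t_def)
      have "real (card Os) < real k" using ss(1) p1 sk by linarith
      then have a1: "card Os < k" by simp
      have "real k < real (card Os + j + 1)" using ss(1) p1 sk cC by simp
      then have a2: "k < card Os + j + 1" by (simp only: of_nat_less_iff)
      show ?thesis unfolding DD_mem using dj True cC a1 a2 by auto
    next
      case False
      then have t2: "t = 2" using t12 by auto
      then have sk: "sig x = real k - 1"
        by (cases "sig x = real k"; cases "sig x = real k - 1") (auto simp: t_def)
      have "real (card Os) + 1 < real k" using ss(1) p1 sk by linarith
      then have a1: "card Os + 1 < k" by linarith
      have "real k < real (card Os + j + 2)" using ss(1) p1 sk cC by simp
      then have a2: "k < card Os + j + 2" by (simp only: of_nat_less_iff)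
      show ?thesis unfolding DD_mem using dj t2 cC a1 a2 by auto
    qed
  qed
  then show "J \<in> (\<lambda>(Os,Cs,t). Jof Os Cs t) ` DD k j" using JJ by force
next
  fix J assume "J \<in> (\<lambda>(Os,Cs,t). Jof Os Cs t) ` (DD k j :: ('n set \<times> 'n set \<times> nat) set)"
  then obtain Os Cs :: "'n set" and t where mem: "(Os,Cs,t) \<in> DD k j" and JJ: "J = Jof Os Cs t"
    by (auto simp: image_iff)
  have dj: "Os \<inter> Cs = {}" using mem unfolding DD_mem by blast
  define o' where "o' = card Os"
  define m where "m = card Cs"
  define s :: real where "s = (if t = 0 then real k - real o' - 1/2 else if t = 1 then real k - real o' else real k - 1 - real o')"
  have cond: "(t = 0 \<and> m = j \<and> 1 \<le> int k - o' \<and> int k - o' \<le> j)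
    \<or> (t = 1 \<and> m = j + 1 \<and> 1 \<le> int k - o' \<and> int k - o' \<le> j)
    \<or> (t = 2 \<and> m = j + 1 \<and> 1 \<le> int k - 1 - o' \<and> int k - 1 - o' \<le> j)"
    using mem unfolding DD_mem o'_def m_def by blast
  have mpos: "m > 0" using cond j by auto
  have sp: "0 < s \<and> s < real m"
  proof -
    { assume h: "t = 0 \<and> m = j \<and> 1 \<le> int k - o' \<and> int k - o' \<le> j"
      then have "1 \<le> real k - real o'" "real k - real o' \<le> real j" by linarith+
      then have ?thesis using h by (simp add: s_def) }
    moreover
    { assume h: "t = 1 \<and> m = j + 1 \<and> 1 \<le> int k - o' \<and> int k - o' \<le> j"
      then have "1 \<le> real k - real o'" "real k - real o' \<le> real j" by linarith+
      then have ?thesis using h by (simp add: s_def) }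
    moreover
    { assume h: "t = 2 \<and> m = j + 1 \<and> 1 \<le> int k - 1 - o' \<and> int k - 1 - o' \<le> j"
      then have "1 \<le> real k - 1 - real o'" "real k - 1 - real o' \<le> real j" by linarith+
      then have ?thesis using h by (simp add: s_def) }
    ultimately show ?thesis using cond by blast
  qed
  have t2: "t \<le> 2" using cond by auto
  define x :: "real^'n" where "x = (\<chi> i. if i \<in> Os then 1 else if i \<in> Cs then s / real m else 0)"
  have sm: "0 < s / real m" "s / real m < 1" using sp mpos by auto
  have sigx: "sig x = real o' + s"
  proof -
    have "sig x = real (card Os) + sum (\<lambda>i. s / real m) Cs"
      unfolding x_def using sum_split3[OF dj, of "\<lambda>i. s / real m"] by simp
    then show ?thesis using mpos by (simp add: o'_def m_def[symmetric])
  qed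
  have sig_cases: "(t = 0 \<and> sig x = real k - 1/2) \<or> (t = 1 \<and> sig x = real k) \<or> (t = 2 \<and> sig x = real k - 1)"
    using cond sigx by (auto simp: s_def)
  have xD: "x \<in> Delta k"
    unfolding Delta_def using sm sig_cases by (auto simp: x_def)
  have O1: "{i. x$i = 1} = Os" using sm dj by (auto simp: x_def)
  have C1: "- {i. x$i = 1} \<inter> - {i. x$i = 0} = Cs" using sm dj by (auto simp: x_def)
  have T1: "(if sig x = real k then 1 else if sig x = real k - 1 then 2 else 0) = t"
    using sig_cases by auto
  have tx: "tight UNIV ca (cb k) x = Jof Os Cs t"
    using tight_Delta[OF xD] O1 C1 T1 by simp
  have xP: "x \<in> polyh UNIV ca (cb k)" using xD Delta_polyh by blast
  have inT: "J \<in> Tsets UNIV ca (cb k)" unfolding Tsets_def using xP tx JJ by blast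
  have xh: "x \<in> hyp ca (cb k) (Jof Os Cs t)" using x_in_hyp[of x ca "cb k" UNIV] tx by simp
  have "aff_dim (hyp ca (cb k) J) = int j"
    using affdim_Jof[OF xh dj] JJ cond mpos by (auto simp: m_def)
  then show "J \<in> {J \<in> Tsets UNIV ca (cb k). aff_dim (hyp ca (cb k) J) = int j}" using inT by blast
qed

lemma inj_DD: "inj_on (\<lambda>(Os,Cs,t). Jof Os Cs t) (DD k j)"
proof (rule inj_onI)
  fix a b assume a: "a \<in> DD k j" and b: "b \<in> DD k j"
    and eq: "(\<lambda>(Os,Cs,t). Jof Os Cs t) a = (\<lambda>(Os,Cs,t). Jof Os Cs t) b"
  obtain Os Cs t where A: "a = (Os,Cs,t)" by (cases a) auto
  obtain Os' Cs' t' where B: "b = (Os',Cs',t')" by (cases b) auto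
  have "Os \<inter> Cs = {}" "t \<le> 2" using a unfolding A DD_mem by auto
  moreover have "Os' \<inter> Cs' = {}" "t' \<le> 2" using b unfolding B DD_mem by auto
  moreover have "Jof Os Cs t = Jof Os' Cs' t'" using eq A B by simp
  ultimately have "Os = Os' \<and> Cs = Cs' \<and> t = t'" using Jof_inj by blast
  then show "a = b" using A B by simp
qed

lemma card_Pset_nat:
  "card (Pset (int q) c :: ('n::finite set \<times> 'n set) set) = (CARD('n) choose c) * ((CARD('n) - c) choose q)"
proof -
  let ?n = "CARD('n)"
  have eq: "(Pset (int q) c :: ('n set \<times> 'n set) set) = (\<lambda>(Cs,Os). (Os,Cs)) ` (SIGMA Cs:{Cs. Cs \<subseteq> UNIV \<and> card Cs = c}. {Os. Os \<subseteq> - Cs \<and> card Os = q})"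
    unfolding Pset_def by (auto simp: image_iff)
  have inj: "inj_on (\<lambda>(Cs::'n set, Os::'n set). (Os,Cs)) X" for X by (auto simp: inj_on_def)
  have cC: "card (- Cs) = ?n - card Cs" for Cs :: "'n set"
    using card_Diff_subset[of Cs UNIV] by (simp add: Compl_eq_Diff_UNIV)
  have "card (Pset (int q) c :: ('n set \<times> 'n set) set) = (\<Sum>Cs\<in>{Cs. Cs \<subseteq> (UNIV::'n set) \<and> card Cs = c}. card {Os. Os \<subseteq> - Cs \<and> card Os = q})"
    unfolding eq by (simp add: card_image[OF inj])
  also have "\<dots> = (\<Sum>Cs\<in>{Cs. Cs \<subseteq> (UNIV::'n set) \<and> card Cs = c}. (?n - c) choose q)"
    by (rule sum.cong) (auto simp: n_subsets cC)
  also have "\<dots> = (?n choose c) * ((?n - c) choose q)"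
  proof -
    have nC: "card {Cs::'n set. card Cs = c} = ?n choose c" using n_subsets[of "UNIV::'n set" c] by simp
    show ?thesis by (simp add: nC)
  qed
  finally show ?thesis .
qed

lemma choose_tri:
  "real ((n choose c) * ((n - c) choose q)) = tri (int q) (int c) (int n - int q - int c)"
proof (cases "c + q \<le> n")
  case True
  have "real ((n choose c) * ((n - c) choose q)) = fact n / (fact c * fact (n - c)) * (fact (n - c) / (fact q * fact (n - c - q)))"
    using True by (simp add: binomial_fact)
  also have "\<dots> = fact n / (fact q * fact c * fact (n - q - c))"
    by (simp add: field_simps)
  finally show ?thesis using True
    by (simp add: tri_def M_def nat_diff_distrib of_nat_diff)
next
  case False
  show ?thesis
  proof (cases "c \<le> n")
    case True
    then have "n - c < q" using False by simp
    then show ?thesis using False by (simp add: tri_def)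
  next
    case False
    then show ?thesis using \<open>\<not> c + q \<le> n\<close> by (simp add: tri_def)
  qed
qed

lemma card_Pset:
  "real (card (Pset p c :: ('n::finite set \<times> 'n set) set)) = tri p (int c) (int CARD('n) - p - int c)"
proof (cases "p < 0")
  case True
  then have "(Pset p c :: ('n set \<times> 'n set) set) = {}" by (auto simp: Pset_def)
  then show ?thesis using True by (simp add: tri_def)
next
  case False
  then obtain q where q: "p = int q" by (metis nonneg_int_cases not_less)
  show ?thesis unfolding q card_Pset_nat using choose_tri by simp
qed

lemma finite_Pset: "finite (Pset p c :: ('n::finite set \<times> 'n set) set)"
  by (rule finite_subset[OF subset_UNIV]) simp

lemma card_DD:
  "real (card (DD k j :: ('n::finite set \<times> 'n set \<times> nat) set)) = gall (int k) (int CARD('n) - int k) (int j)"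
proof -
  let ?n = "CARD('n)"
  define A0 where "A0 r = (\<lambda>(Os,Cs). (Os,Cs,0::nat)) ` (Pset (int k - r) j :: ('n set \<times> 'n set) set)" for r
  define A1 where "A1 r = (\<lambda>(Os,Cs). (Os,Cs,1::nat)) ` (Pset (int k - r) (j+1) :: ('n set \<times> 'n set) set)" for r
  define A2 where "A2 r = (\<lambda>(Os,Cs). (Os,Cs,2::nat)) ` (Pset (int k - 1 - r) (j+1) :: ('n set \<times> 'n set) set)" for r
  have DDe: "(DD k j :: ('n set \<times> 'n set \<times> nat) set) = (\<Union>r\<in>{1..int j}. A0 r \<union> A1 r \<union> A2 r)"
    unfolding DD_def A0_def A1_def A2_def ..
  have inj: "inj_on (\<lambda>(Os::'n set, Cs::'n set). (Os,Cs,u::nat)) X" for u X by (auto simp: inj_on_def)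
  have cA0: "card (A0 r) = card (Pset (int k - r) j :: ('n set \<times> 'n set) set)" for r
    unfolding A0_def by (rule card_image[OF inj])
  have cA1: "card (A1 r) = card (Pset (int k - r) (j+1) :: ('n set \<times> 'n set) set)" for r
    unfolding A1_def by (rule card_image[OF inj])
  have cA2: "card (A2 r) = card (Pset (int k - 1 - r) (j+1) :: ('n set \<times> 'n set) set)" for r
    unfolding A2_def by (rule card_image[OF inj])
  have fin: "finite (A0 r)" "finite (A1 r)" "finite (A2 r)" for r
    unfolding A0_def A1_def A2_def by (simp_all add: finite_Pset)
  have d01: "A0 r \<inter> A1 r = {}" "A0 r \<inter> A2 r = {}" "A1 r \<inter> A2 r = {}" for r
    unfolding A0_def A1_def A2_def by auto
  have cU: "card (A0 r \<union> A1 r \<union> A2 r) = card (A0 r) + card (A1 r) + card (A2 r)" for r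
  proof -
    have "card (A0 r \<union> A1 r \<union> A2 r) = card (A0 r \<union> A1 r) + card (A2 r)"
      by (rule card_Un_disjoint) (simp_all add: fin Int_Un_distrib2 d01)
    also have "card (A0 r \<union> A1 r) = card (A0 r) + card (A1 r)"
      by (rule card_Un_disjoint) (use fin d01 in auto)
    finally show ?thesis .
  qed
  have disj: "\<forall>r\<in>{1..int j}. \<forall>s\<in>{1..int j}. r \<noteq> s \<longrightarrow> (A0 r \<union> A1 r \<union> A2 r) \<inter> (A0 s \<union> A1 s \<union> A2 s) = {}"
    unfolding A0_def A1_def A2_def Pset_def by auto
  have "card (DD k j :: ('n set \<times> 'n set \<times> nat) set) = (\<Sum>r\<in>{1..int j}. card (A0 r \<union> A1 r \<union> A2 r))"
    unfolding DDe by (rule card_UN_disjoint) (use fin disj in auto)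
  then have "real (card (DD k j :: ('n set \<times> 'n set \<times> nat) set)) =
     (\<Sum>r\<in>{1..int j}. real (card (Pset (int k - r) j :: ('n set \<times> 'n set) set))
        + real (card (Pset (int k - r) (j+1) :: ('n set \<times> 'n set) set))
        + real (card (Pset (int k - 1 - r) (j+1) :: ('n set \<times> 'n set) set)))"
    by (simp add: cU cA0 cA1 cA2)
  also have "\<dots> = (\<Sum>r\<in>{1..int j}. tri (int k - r) (int j) (int ?n - int k - int j + r)
        + tri (int k - r) (int j + 1) (int ?n - int k - int j - 1 + r)
        + tri (int k - 1 - r) (int j + 1) (int ?n - int k - int j + r))"
    by (rule sum.cong[OF refl]) (simp add: card_Pset algebra_simps)
  also have "\<dots> = gall (int k) (int ?n - int k) (int j)"
    unfolding gall_def ffree_def ftop_def fbot_def sum.distrib by (simp add: algebra_simps)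
  finally show ?thesis .
qed

theorem corollary2p2:
  "\<exists>G :: fps3.
     G * ((1 - varX - varY) * (1 - varX - varY - varX * varT) * (1 - varX - varY - varY * varT))
       = varX * varT
   \<and> (\<forall>a b j. (a = 0 \<or> j = 0 \<or> a + b < j) \<longrightarrow> coeff3 G a b j = 0)
   \<and> (\<forall>k j. 1 \<le> k \<and> k \<le> CARD('n::finite) \<and> 1 \<le> j \<and> j \<le> CARD('n) \<longrightarrow>
        coeff3 G k (CARD('n) - k) j = real (num_faces j (Delta k :: (real ^ 'n) set)))"
proof (intro exI[of _ "mk gall"] conjI allI impI)
  show "mk gall * ((1 - varX - varY) * (1 - varX - varY - varX * varT) * (1 - varX - varY - varY * varT))
       = varX * varT" by (rule series_identity)
next
  fix a b j :: nat assume "a = 0 \<or> j = 0 \<or> a + b < j"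
  then show "coeff3 (mk gall) a b j = 0" by (simp add: gall_zero)
next
  fix k j :: nat assume h: "1 \<le> k \<and> k \<le> CARD('n) \<and> 1 \<le> j \<and> j \<le> CARD('n)"
  have "num_faces j (Delta k :: (real ^ 'n) set)
      = card {J \<in> Tsets UNIV (ca :: 'n cidx \<Rightarrow> real^'n) (cb k). aff_dim (hyp ca (cb k) J) = int j}"
    unfolding num_faces_def Delta_polyh using faces_card[OF finite_cidx, of ca "cb k" j] by simp
  also have "\<dots> = card ((\<lambda>(Os,Cs,t). Jof Os Cs t) ` (DD k j :: ('n set \<times> 'n set \<times> nat) set))"
    using Tsets_eq[of j k, where 'n='n] h by simp
  also have "\<dots> = card (DD k j :: ('n set \<times> 'n set \<times> nat) set)"
    by (rule card_image[OF inj_DD])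
  finally have "real (num_faces j (Delta k :: (real ^ 'n) set)) = gall (int k) (int CARD('n) - int k) (int j)"
    using card_DD by simp
  then show "coeff3 (mk gall) k (CARD('n) - k) j = real (num_faces j (Delta k :: (real ^ 'n) set))"
    using h by (simp add: of_nat_diff)
qed

end
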